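(* Let $\mathcal{G}_R(\mathcal{N}_R,\mathcal{E}_R)$ be an R-graph with ingress points $\mathcal{M}$ and parent-selection probabilities $p_{ij}$, and for $\mathcal{X}\subseteq\mathcal{N}_R$ let $$F(\mathcal{X})=E_P[\mathcal{NC}_R(\mathcal{X})]=\sum_{x\in\mathcal{M}^{|\mathcal{X}|}}\mathcal{NC}_R(\mathcal{X}\rhd x)\,P(\mathcal{X}\rhd x)$$ (as defined in the context). Then the set function $F$ is (i) non-negative and monotone (non-decreasing), (ii) not submodular in general, and (iii) not supermodular in general (i.e., there exist R-graphs for which $F$ is not submodular, and R-graphs for which $F$ is not supermodular).
   Context: An R-graph is a directed acyclic graph $\mathcal{G}_R(\mathcal{N}_R,\mathcal{E}_R)$ rooted at a destination node $n_{dst}$; an edge $j\to i$ means $i$ may use the routing path learned from its parent $j$; $P_i$ denotes the parents of $i$. $n_{dst}$ has a finite set $\mathcal{M}$ of ingress points, each child of $n_{dst}$ attached to exactly one. Each node $i$ selects a parent $j\in P_i$ with probability $p_{ij}$ ($\sum_{j\in P_i}p_{ij}=1$) and routes its traffic through the same ingress point as the selected parent; we write $i\rhd m$ if $i$ routes through ingress point $m$. For a set $\mathcal{X}$ of (measured) nodes and a vector $x\in\mathcal{M}^{|\mathcal{X}|}$, $\mathcal{X}\rhd x$ denotes the event that each node of $\mathcal{X}$ routes through the corresponding entry of $x$, and $P(\mathcal{X}\rhd x)$ is its probability. $\mathcal{NC}_R(\mathcal{X}\rhd x)=|\{i\in\mathcal{N}_R: f(i)\neq 0\mid \mathcal{X}\rhd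 x\}|$ is the number of nodes whose route is inferred with certainty (their route is determined, i.e., has probability $1$ for some ingress point) given the oracle $\mathcal{X}\rhd x$. A set function $F$ is submodular if $F(A\cup\{\epsilon\})-F(A)\ge F(B\cup\{\epsilon\})-F(B)$ for all $A\subseteq B$ and $\epsilon\notin B$, and supermodular if the reverse inequality always holds. *)

theory Defs
  imports Complex_Main "HOL-Library.FuncSet"
begin

text \<open>An R-graph: routing nodes N (the destination dst is not in N), parent sets P i
  (an edge j -> i for every j in P i), ingress point ing i of each child i of dst,
  finite ingress set M, and parent selection probabilities p i j.\<close>

definition rgraph ::
  "'a set \<Rightarrow> 'a \<Rightarrow> ('a \<Rightarrow> 'a set) \<Rightarrow> 'm set \<Rightarrow> ('a \<Rightarrow> 'm) \<Rightarrow> ('a \<Rightarrow> 'a \<Rightarrow> real) \<Rightarrow> bool"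
where
  "rgraph N dst P M ing p \<longleftrightarrow>
     finite N \<and> dst \<notin> N \<and> finite M \<and>
     (\<forall>i\<in>N. P i \<noteq> {} \<and> P i \<subseteq> insert dst N) \<and>
     acyclic {(j, i). i \<in> N \<and> j \<in> P i} \<and>
     (\<forall>i\<in>N. dst \<in> P i \<longrightarrow> ing i \<in> M) \<and>
     (\<forall>i\<in>N. (\<forall>j\<in>P i. p i j > 0) \<and> (\<Sum>j\<in>P i. p i j) = 1)"

text \<open>Outcomes of the random parent selection: s i is the parent selected by node i.\<close>
definition selections :: "'a set \<Rightarrow> ('a \<Rightarrow> 'a set) \<Rightarrow> ('a \<Rightarrow> 'a) set" where
  "selections N P = PiE N P"

definition weight :: "'a set \<Rightarrow> ('a \<Rightarrow> 'a \<Rightarrow> real) \<Rightarrow> ('a \<Rightarrow> 'a) \<Rightarrow> real" where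
  "weight N p s = (\<Prod>i\<in>N. p i (s i))"

inductive routes :: "'a \<Rightarrow> ('a \<Rightarrow> 'm) \<Rightarrow> ('a \<Rightarrow> 'a) \<Rightarrow> 'a \<Rightarrow> 'm \<Rightarrow> bool"
  for dst ing s where
  direct: "s i = dst \<Longrightarrow> routes dst ing s i (ing i)"
| via: "s i = j \<Longrightarrow> j \<noteq> dst \<Longrightarrow> routes dst ing s j m \<Longrightarrow> routes dst ing s i m"

definition prob_ev ::
  "'a set \<Rightarrow> ('a \<Rightarrow> 'a set) \<Rightarrow> ('a \<Rightarrow> 'a \<Rightarrow> real) \<Rightarrow> (('a \<Rightarrow> 'a) \<Rightarrow> bool) \<Rightarrow> real" where
  "prob_ev N P p E = (\<Sum>s\<in>{s\<in>selections N P. E s}. weight N p s)"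

definition routes_as :: "'a \<Rightarrow> ('a \<Rightarrow> 'm) \<Rightarrow> 'a set \<Rightarrow> ('a \<Rightarrow> 'm) \<Rightarrow> ('a \<Rightarrow> 'a) \<Rightarrow> bool" where
  "routes_as dst ing X x s \<longleftrightarrow> (\<forall>i\<in>X. routes dst ing s i (x i))"

text \<open>Number of nodes whose route is determined (probability 1 for some ingress point)
  given the oracle X |> x; conditional probability P(A and B)/P(B).\<close>
definition NC ::
  "'a set \<Rightarrow> 'a \<Rightarrow> ('a \<Rightarrow> 'a set) \<Rightarrow> ('a \<Rightarrow> 'm) \<Rightarrow> ('a \<Rightarrow> 'a \<Rightarrow> real) \<Rightarrow> 'a set \<Rightarrow> ('a \<Rightarrow> 'm) \<Rightarrow> nat"
where
  "NC N dst P ing p X x = card {i\<in>N. \<exists>m.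
      prob_ev N P p (\<lambda>s. routes dst ing s i m \<and> routes_as dst ing X x s)
        / prob_ev N P p (routes_as dst ing X x) = 1}"

definition F ::
  "'a set \<Rightarrow> 'a \<Rightarrow> ('a \<Rightarrow> 'a set) \<Rightarrow> 'm set \<Rightarrow> ('a \<Rightarrow> 'm) \<Rightarrow> ('a \<Rightarrow> 'a \<Rightarrow> real) \<Rightarrow> 'a set \<Rightarrow> real"
where
  "F N dst P M ing p X =
     (\<Sum>x\<in>PiE X (\<lambda>_. M). real (NC N dst P ing p X x) * prob_ev N P p (routes_as dst ing X x))"

end

theory Submission
  imports Defs
begin


definition rt :: "'a \<Rightarrow> ('a \<Rightarrow> 'm) \<Rightarrow> ('a \<Rightarrow> 'a) \<Rightarrow> 'a \<Rightarrow> 'm" where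
  "rt dst ing s i = (THE m. routes dst ing s i m)"

lemma routes_step:
  "routes dst ing s i m \<longleftrightarrow> (if s i = dst then m = ing i else routes dst ing s (s i) m)"
  by (subst routes.simps) auto

lemma routes_unique:
  assumes "routes dst ing s i m" "routes dst ing s i m'" shows "m = m'"
  using assms
proof (induction arbitrary: m' rule: routes.induct)
  case (direct i)
  then show ?case using routes_step[of dst ing s i m'] by simp
next
  case (via i j m)
  then have "routes dst ing s j m'" using routes_step[of dst ing s i m'] by simp
  then show ?case using via.IH by simp
qed

lemma rt_eq: "rt dst ing s i = (if s i = dst then ing i else rt dst ing s (s i))"
proof -
  have "routes dst ing s i = (\<lambda>m. if s i = dst then m = ing i else routes dst ing s (s i) m)"
    by (rule ext, rule routes_step)
  then show ?thesis unfolding rt_def by simp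
qed

lemma routes_exists:
  assumes rg: "rgraph N dst P M ing p" and s: "s \<in> selections N P" and i: "i \<in> N"
  shows "\<exists>m\<in>M. routes dst ing s i m"
proof -
  let ?R = "{(j, i). i \<in> N \<and> j \<in> P i}"
  have fin: "finite ?R"
  proof (rule finite_subset)
    show "?R \<subseteq> insert dst N \<times> N" using rg unfolding rgraph_def by auto
    show "finite (insert dst N \<times> N)" using rg unfolding rgraph_def by auto
  qed
  have wf: "wf ?R" using finite_acyclic_wf[OF fin] rg unfolding rgraph_def by auto
  show ?thesis using i
  proof (induction i rule: wf_induct[OF wf])
    case (1 i)
    have si: "s i \<in> P i" using s 1(2) unfolding selections_def by auto
    show ?case
    proof (cases "s i = dst")
      case True
      then have "ing i \<in> M" using rg si 1(2) unfolding rgraph_def by auto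
      then show ?thesis using True by (auto intro: routes.direct)
    next
      case False
      have "s i \<in> N" using rg si 1(2) False unfolding rgraph_def by auto
      moreover have "(s i, i) \<in> ?R" using si 1(2) by auto
      ultimately obtain m where "m \<in> M" "routes dst ing s (s i) m" using 1(1) by blast
      then show ?thesis using False by (auto intro: routes.via)
    qed
  qed
qed

lemma routes_iff:
  assumes rg: "rgraph N dst P M ing p" and s: "s \<in> selections N P" and i: "i \<in> N"
  shows "routes dst ing s i m \<longleftrightarrow> m = rt dst ing s i" and "rt dst ing s i \<in> M"
proof -
  obtain m0 where m0: "m0 \<in> M" "routes dst ing s i m0" using routes_exists[OF assms] by blast
  have "rt dst ing s i = m0" unfolding rt_def
    using m0 routes_unique by (metis the_equality)
  then show "routes dst ing s i m \<longleftrightarrow> m = rt dst ing s i" "rt dst ing s i \<in> M"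
    using m0 routes_unique by metis+
qed

lemma fin_sel:
  assumes rg: "rgraph N dst P M ing p" shows "finite (selections N P)"
  unfolding selections_def
proof (rule finite_PiE)
  show "finite N" using rg unfolding rgraph_def by auto
  fix i assume "i \<in> N"
  then have "P i \<subseteq> insert dst N" using rg unfolding rgraph_def by auto
  then show "finite (P i)" using rg unfolding rgraph_def by (auto intro: finite_subset)
qed

lemma weight_pos:
  assumes rg: "rgraph N dst P M ing p" and s: "s \<in> selections N P"
  shows "weight N p s > 0"
  unfolding weight_def
proof (rule prod_pos)
  fix i assume "i \<in> N"
  moreover have "s i \<in> P i" using s \<open>i \<in> N\<close> unfolding selections_def by (rule PiE_mem)
  ultimately show "0 < p i (s i)" using rg unfolding rgraph_def by auto
qed

lemma ratio_iff:
  assumes rg: "rgraph N dst P M ing p"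
  shows "(prob_ev N P p (\<lambda>s. A s \<and> E s) / prob_ev N P p E = 1) \<longleftrightarrow>
     ((\<exists>s\<in>selections N P. E s) \<and> (\<forall>s\<in>selections N P. E s \<longrightarrow> A s))"
proof -
  let ?S = "selections N P"
  let ?w = "weight N p"
  have fin: "finite ?S" by (rule fin_sel[OF rg])
  have wp: "\<And>s. s \<in> ?S \<Longrightarrow> ?w s > 0" using weight_pos[OF rg] by blast
  have split: "prob_ev N P p E = prob_ev N P p (\<lambda>s. A s \<and> E s) + (\<Sum>s\<in>{s\<in>?S. E s \<and> \<not> A s}. ?w s)"
    unfolding prob_ev_def
  proof -
    have "{s\<in>?S. E s} = {s\<in>?S. A s \<and> E s} \<union> {s\<in>?S. E s \<and> \<not> A s}" by auto
    moreover have "finite {s\<in>?S. A s \<and> E s}" "finite {s\<in>?S. E s \<and> \<not> A s}" using fin by auto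
    ultimately show "(\<Sum>s\<in>{s\<in>?S. E s}. ?w s) = (\<Sum>s\<in>{s\<in>?S. A s \<and> E s}. ?w s) + (\<Sum>s\<in>{s\<in>?S. E s \<and> \<not> A s}. ?w s)"
      by (metis (no_types, lifting) sum.union_disjoint disjoint_iff mem_Collect_eq)
  qed
  show ?thesis
  proof
    assume r: "prob_ev N P p (\<lambda>s. A s \<and> E s) / prob_ev N P p E = 1"
    then have nz: "prob_ev N P p E \<noteq> 0" by auto
    then have eq: "prob_ev N P p (\<lambda>s. A s \<and> E s) = prob_ev N P p E" using r by (simp add: divide_eq_1_iff)
    have "(\<Sum>s\<in>{s\<in>?S. E s \<and> \<not> A s}. ?w s) = 0" using split eq by simp
    then have "\<forall>s\<in>{s\<in>?S. E s \<and> \<not> A s}. ?w s = 0"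
      using sum_nonneg_eq_0_iff[of "{s\<in>?S. E s \<and> \<not> A s}" ?w] fin wp by (auto simp: less_imp_le)
    then have "\<forall>s\<in>?S. E s \<longrightarrow> A s" using wp by force
    moreover have "\<exists>s\<in>?S. E s" using nz unfolding prob_ev_def by (metis (no_types, lifting) empty_Collect_eq sum.empty)
    ultimately show "(\<exists>s\<in>?S. E s) \<and> (\<forall>s\<in>?S. E s \<longrightarrow> A s)" by blast
  next
    assume h: "(\<exists>s\<in>?S. E s) \<and> (\<forall>s\<in>?S. E s \<longrightarrow> A s)"
    then have "{s\<in>?S. A s \<and> E s} = {s\<in>?S. E s}" by auto
    then have eq: "prob_ev N P p (\<lambda>s. A s \<and> E s) = prob_ev N P p E" unfolding prob_ev_def by simp
    obtain s0 where s0: "s0 \<in> ?S" "E s0" using h by blast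
    have "prob_ev N P p E > 0" unfolding prob_ev_def
      by (rule sum_pos2[of _ s0]) (use fin s0 wp in \<open>auto simp: less_imp_le\<close>)
    then show "prob_ev N P p (\<lambda>s. A s \<and> E s) / prob_ev N P p E = 1" using eq by simp
  qed
qed



definition Dset where
  "Dset N dst P ing X s = {i\<in>N. \<forall>s'\<in>selections N P.
      (\<forall>k\<in>X. rt dst ing s' k = rt dst ing s k) \<longrightarrow> rt dst ing s' i = rt dst ing s i}"

lemma NC_eq:
  assumes rg: "rgraph N dst P M ing p" and X: "X \<subseteq> N" and s: "s \<in> selections N P"
  shows "NC N dst P ing p X (restrict (rt dst ing s) X) = card (Dset N dst P ing X s)"
proof -
  let ?S = "selections N P"
  let ?x = "restrict (rt dst ing s) X"
  have E: "routes_as dst ing X ?x s' \<longleftrightarrow> (\<forall>k\<in>X. rt dst ing s' k = rt dst ing s k)"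
    if s': "s' \<in> ?S" for s'
  proof -
    have "routes dst ing s' k (?x k) \<longleftrightarrow> rt dst ing s' k = rt dst ing s k" if "k \<in> X" for k
      using routes_iff(1)[OF rg s', of k] X that by auto
    then show ?thesis unfolding routes_as_def by blast
  qed
  have "{i\<in>N. \<exists>m. prob_ev N P p (\<lambda>s'. routes dst ing s' i m \<and> routes_as dst ing X ?x s')
        / prob_ev N P p (routes_as dst ing X ?x) = 1} = Dset N dst P ing X s"
    unfolding Dset_def
  proof (rule Collect_cong, rule conj_cong[OF refl])
    fix i assume i: "i \<in> N"
    have R: "routes dst ing s' i m \<longleftrightarrow> m = rt dst ing s' i" if "s' \<in> ?S" for s' m
      using routes_iff(1)[OF rg that i] .
    show "(\<exists>m. prob_ev N P p (\<lambda>s'. routes dst ing s' i m \<and> routes_as dst ing X ?x s')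
        / prob_ev N P p (routes_as dst ing X ?x) = 1) \<longleftrightarrow>
       (\<forall>s'\<in>?S. (\<forall>k\<in>X. rt dst ing s' k = rt dst ing s k) \<longrightarrow> rt dst ing s' i = rt dst ing s i)"
      unfolding ratio_iff[OF rg] using s E R by (smt (verit))
  qed
  then show ?thesis unfolding NC_def Dset_def by simp
qed

lemma F_eq:
  assumes rg: "rgraph N dst P M ing p" and X: "X \<subseteq> N"
  shows "F N dst P M ing p X = (\<Sum>s\<in>selections N P. weight N p s * real (card (Dset N dst P ing X s)))"
proof -
  let ?S = "selections N P"
  let ?w = "weight N p"
  let ?PX = "PiE X (\<lambda>_. M)"
  let ?nc = "\<lambda>x. real (NC N dst P ing p X x)"
  have finS: "finite ?S" by (rule fin_sel[OF rg])
  have finPX: "finite ?PX" using rg X unfolding rgraph_def by (intro finite_PiE) (auto intro: finite_subset)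
  have ev: "routes_as dst ing X x s \<longleftrightarrow> x = restrict (rt dst ing s) X"
    if "s \<in> ?S" "x \<in> ?PX" for s x
  proof -
    have "routes_as dst ing X x s \<longleftrightarrow> (\<forall>k\<in>X. x k = rt dst ing s k)"
      unfolding routes_as_def using routes_iff(1)[OF rg that(1)] X by auto
    also have "\<dots> \<longleftrightarrow> x = restrict (rt dst ing s) X"
      using that(2) by (auto simp: PiE_def extensional_def restrict_def fun_eq_iff)
    finally show ?thesis .
  qed
  have mem: "restrict (rt dst ing s) X \<in> ?PX" if "s \<in> ?S" for s
    using routes_iff(2)[OF rg that] X by auto
  have "F N dst P M ing p X = (\<Sum>x\<in>?PX. \<Sum>s\<in>?S. if routes_as dst ing X x s then ?nc x * ?w s else 0)"
    unfolding F_def prob_ev_def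
    by (simp add: sum_distrib_left sum.inter_filter[OF finS]) (intro sum.cong refl, simp)
  also have "\<dots> = (\<Sum>s\<in>?S. \<Sum>x\<in>?PX. if routes_as dst ing X x s then ?nc x * ?w s else 0)"
    by (rule sum.swap)
  also have "\<dots> = (\<Sum>s\<in>?S. \<Sum>x\<in>?PX. if x = restrict (rt dst ing s) X then ?nc x * ?w s else 0)"
    by (rule sum.cong[OF refl], rule sum.cong[OF refl]) (simp add: ev)
  also have "\<dots> = (\<Sum>s\<in>?S. ?nc (restrict (rt dst ing s) X) * ?w s)"
    by (rule sum.cong[OF refl]) (use mem in \<open>simp add: finPX\<close>)
  also have "\<dots> = (\<Sum>s\<in>?S. ?w s * real (card (Dset N dst P ing X s)))"
    by (rule sum.cong[OF refl]) (simp add: NC_eq[OF rg X])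
  finally show ?thesis .
qed

lemma part1:
  assumes rg: "rgraph N dst P M ing p"
  shows "(\<forall>X. X \<subseteq> N \<longrightarrow> 0 \<le> F N dst P M ing p X) \<and>
       (\<forall>X Y. X \<subseteq> Y \<and> Y \<subseteq> N \<longrightarrow> F N dst P M ing p X \<le> F N dst P M ing p Y)"
proof (intro conjI allI impI)
  fix X assume "X \<subseteq> N"
  show "0 \<le> F N dst P M ing p X" unfolding F_eq[OF rg \<open>X \<subseteq> N\<close>]
    by (rule sum_nonneg) (use weight_pos[OF rg] in \<open>auto simp: less_imp_le\<close>)
next
  fix X Y assume h: "X \<subseteq> Y \<and> Y \<subseteq> N"
  then have XN: "X \<subseteq> N" by auto
  have finN: "finite N" using rg unfolding rgraph_def by auto
  show "F N dst P M ing p X \<le> F N dst P M ing p Y"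
    unfolding F_eq[OF rg XN] F_eq[OF rg conjunct2[OF h]]
  proof (rule sum_mono)
    fix s assume s: "s \<in> selections N P"
    have "Dset N dst P ing X s \<subseteq> Dset N dst P ing Y s"
      using h unfolding Dset_def by blast
    then have "card (Dset N dst P ing X s) \<le> card (Dset N dst P ing Y s)"
      by (rule card_mono[rotated]) (auto simp: Dset_def finN)
    then show "weight N p s * real (card (Dset N dst P ing X s)) \<le> weight N p s * real (card (Dset N dst P ing Y s))"
      using weight_pos[OF rg s] by simp
  qed
qed

lemma F_eq2:
  assumes rg: "rgraph N dst P M ing p" and X: "X \<subseteq> N"
  shows "F N dst P M ing p X = (\<Sum>s\<in>selections N P. weight N p s *
     (\<Sum>i\<in>N. if (\<forall>s'\<in>selections N P.
      (\<forall>k\<in>X. rt dst ing s' k = rt dst ing s k) \<longrightarrow> rt dst ing s' i = rt dst ing s i) then 1 else 0))"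
proof -
  have finN: "finite N" using rg unfolding rgraph_def by auto
  have c: "real (card {i\<in>N. Q i}) = (\<Sum>i\<in>N. if Q i then 1 else 0)" for Q
    by (subst sum.inter_filter[OF finN, symmetric]) simp
  show ?thesis unfolding F_eq[OF rg X] Dset_def c ..
qed



lemma sum_PiE_insert:
  assumes "a \<notin> A"
  shows "sum g (PiE (insert a A) B) = (\<Sum>y\<in>B a. \<Sum>s\<in>PiE A B. g (s(a:=y)))"
  unfolding PiE_insert_eq
  by (subst sum.reindex[OF inj_combinator[OF assms]]) (simp add: sum.cartesian_product split_def)

lemma ball_PiE_insert:
  "(\<forall>s\<in>PiE (insert a A) B. Q s) \<longleftrightarrow> (\<forall>y\<in>B a. \<forall>s\<in>PiE A B. Q (s(a:=y)))"
  unfolding PiE_insert_eq by auto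

lemma card_filter_sum:
  assumes "finite A" shows "card {x\<in>A. Q x} = (\<Sum>x\<in>A. if Q x then 1 else 0)"
  using assms by (simp add: sum.If_cases Int_def)

definition "P3 = (\<lambda>i::nat. if i = 2 then {0} else if i = 3 then {0,2} else {3::nat})"
definition "ing3 = (\<lambda>i::nat. if i = 2 then 2 else (1::nat))"
definition "p3 = (\<lambda>(i::nat) (j::nat). if i = 3 then 1/2 else (1::real))"

lemma rg3: "rgraph {2,3,4} 0 P3 {1,2} ing3 p3"
proof -
  have "{(j, i). i \<in> {2,3,4::nat} \<and> j \<in> P3 i} \<subseteq> less_than" by (auto simp: P3_def)
  then have "acyclic {(j, i). i \<in> {2,3,4::nat} \<and> j \<in> P3 i}"
    by (rule acyclic_subset[OF wf_acyclic[OF wf_less_than]])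
  then show ?thesis unfolding rgraph_def by (simp add: P3_def ing3_def p3_def)
qed

lemmas evs = selections_def weight_def
  sum_PiE_insert ball_PiE_insert rt_eq[where i="2::nat"] rt_eq[where i="3::nat"] rt_eq[where i="4::nat"]
  rt_eq[where i="5::nat"]

lemma F3:
  "F {2,3,4} 0 P3 {1,2} ing3 p3 {} = 1"
  "F {2,3,4} 0 P3 {1,2} ing3 p3 {3} = 3"
  "F {2,3,4} 0 P3 {1,2} ing3 p3 {4} = 3"
  "F {2,3,4} 0 P3 {1,2} ing3 p3 {3,4} = 3"
  by (subst F_eq2[OF rg3], simp, simp add: evs P3_def ing3_def p3_def del: sum_constant)+

definition "P2 = (\<lambda>i::nat. if i = 2 then {0} else if i = 3 then {0,2} else if i = 4 then {0,2} else {3,4::nat})"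
definition "ing2 = (\<lambda>i::nat. if i = 2 then 2 else (1::nat))"
definition "p2 = (\<lambda>(i::nat) (j::nat). if i = 2 then 1 else (1/2::real))"

lemma rg2: "rgraph {2,3,4,5} 0 P2 {1,2} ing2 p2"
proof -
  have "{(j, i). i \<in> {2,3,4,5::nat} \<and> j \<in> P2 i} \<subseteq> less_than" by (auto simp: P2_def)
  then have "acyclic {(j, i). i \<in> {2,3,4,5::nat} \<and> j \<in> P2 i}"
    by (rule acyclic_subset[OF wf_acyclic[OF wf_less_than]])
  then show ?thesis unfolding rgraph_def by (simp add: P2_def ing2_def p2_def)
qed

lemma F2:
  "F {2,3,4,5} 0 P2 {1,2} ing2 p2 {} = 1"
  "F {2,3,4,5} 0 P2 {1,2} ing2 p2 {4} = 2"
  "F {2,3,4,5} 0 P2 {1,2} ing2 p2 {3} = 2"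
  "F {2,3,4,5} 0 P2 {1,2} ing2 p2 {4,3} = 7/2"
  by (subst F_eq2[OF rg2], simp, simp add: evs P2_def ing2_def p2_def del: sum_constant)+


theorem lemma4p1:
  shows
   "(\<forall>(N :: 'a set) dst P (M :: 'm set) ing p. rgraph N dst P M ing p \<longrightarrow>
       (\<forall>X. X \<subseteq> N \<longrightarrow> 0 \<le> F N dst P M ing p X) \<and>
       (\<forall>X Y. X \<subseteq> Y \<and> Y \<subseteq> N \<longrightarrow> F N dst P M ing p X \<le> F N dst P M ing p Y))
    \<and> (\<exists>(N :: nat set) dst P (M :: nat set) ing p. rgraph N dst P M ing p \<and>
       (\<exists>A B e. A \<subseteq> B \<and> B \<subseteq> N \<and> e \<in> N \<and> e \<notin> B \<and>
          F N dst P M ing p (insert e A) - F N dst P M ing p A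
            < F N dst P M ing p (insert e B) - F N dst P M ing p B))
    \<and> (\<exists>(N :: nat set) dst P (M :: nat set) ing p. rgraph N dst P M ing p \<and>
       (\<exists>A B e. A \<subseteq> B \<and> B \<subseteq> N \<and> e \<in> N \<and> e \<notin> B \<and>
          F N dst P M ing p (insert e A) - F N dst P M ing p A
            > F N dst P M ing p (insert e B) - F N dst P M ing p B))"
proof (intro conjI)
  show "\<forall>(N :: 'a set) dst P (M :: 'm set) ing p. rgraph N dst P M ing p \<longrightarrow>
       (\<forall>X. X \<subseteq> N \<longrightarrow> 0 \<le> F N dst P M ing p X) \<and>
       (\<forall>X Y. X \<subseteq> Y \<and> Y \<subseteq> N \<longrightarrow> F N dst P M ing p X \<le> F N dst P M ing p Y)"
    using part1 by blast
  have "F {2,3,4,5} 0 P2 {1,2} ing2 p2 (insert 4 {}) - F {2,3,4,5} 0 P2 {1,2} ing2 p2 {}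
      < F {2,3,4,5} 0 P2 {1,2} ing2 p2 (insert 4 {3}) - F {2,3,4,5} 0 P2 {1,2} ing2 p2 {3}"
    unfolding F2 by simp
  then show "\<exists>(N :: nat set) dst P (M :: nat set) ing p. rgraph N dst P M ing p \<and>
       (\<exists>A B e. A \<subseteq> B \<and> B \<subseteq> N \<and> e \<in> N \<and> e \<notin> B \<and>
          F N dst P M ing p (insert e A) - F N dst P M ing p A
            < F N dst P M ing p (insert e B) - F N dst P M ing p B)"
    using rg2 by (intro exI[of _ "{2,3,4,5}"] exI[of _ "0::nat"] exI[of _ P2] exI[of _ "{1,2}"]
        exI[of _ ing2] exI[of _ p2] conjI exI[of _ "{}"] exI[of _ "{3}"] exI[of _ "4::nat"]) auto
  have "F {2,3,4} 0 P3 {1,2} ing3 p3 (insert 3 {}) - F {2,3,4} 0 P3 {1,2} ing3 p3 {}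
      > F {2,3,4} 0 P3 {1,2} ing3 p3 (insert 3 {4}) - F {2,3,4} 0 P3 {1,2} ing3 p3 {4}"
    unfolding F3 by simp
  then show "\<exists>(N :: nat set) dst P (M :: nat set) ing p. rgraph N dst P M ing p \<and>
       (\<exists>A B e. A \<subseteq> B \<and> B \<subseteq> N \<and> e \<in> N \<and> e \<notin> B \<and>
          F N dst P M ing p (insert e A) - F N dst P M ing p A
            > F N dst P M ing p (insert e B) - F N dst P M ing p B)"
    using rg3 by (intro exI[of _ "{2,3,4}"] exI[of _ "0::nat"] exI[of _ P3] exI[of _ "{1,2}"]
        exI[of _ ing3] exI[of _ p3] conjI exI[of _ "{}"] exI[of _ "{4}"] exI[of _ "3::nat"]) auto
qed

end
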